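(* Let $\varepsilon>0$ and let $A$ be a real symmetric matrix with top eigenvector $u_1$ (a unit vector), whose two largest eigenvalues are $\lambda_1=1+2\varepsilon$ (with eigenvector $u_1$) and $\lambda_2=1$, and such that $|\lambda_i|\le 1$ for all $i\ge 2$. Let $w$ be a vector with $\langle u_1,w\rangle^2\le\varepsilon/2$ and $\langle u_1,Aw\rangle^2\le\varepsilon/2$. Then \[ \left\|A\left(I-ww^\top\right)\right\|_{\mathrm{op}} > (1+\varepsilon)\min_{\|u\|_2=1}\left\|A\left(I-uu^\top\right)\right\|_{\mathrm{op}}. \]
   Context: $\|\cdot\|_{\mathrm{op}}$ denotes the spectral norm. *)

theory Defs
  imports "HOL-Analysis.Analysis"
begin

definition outer :: "real^'n \<Rightarrow> real^'n \<Rightarrow> real^'n^'n" where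
  "outer u v = (\<chi> i j. u $ i * v $ j)"

definition opnorm :: "real^'n^'n \<Rightarrow> real" where
  "opnorm M = onorm (\<lambda>x. M *v x)"

end

theory Submission
  imports Defs
begin

lemma outer_mv: "outer w w *v x = (w \<bullet> x) *\<^sub>R (w::real^'n)"
  by (simp add: vec_eq_iff outer_def matrix_vector_mult_def inner_vec_def sum_distrib_left sum_distrib_right mult.commute mult.left_commute)

lemma proj_mv: "(A ** (mat 1 - outer w w)) *v x = A *v (x - (w \<bullet> x) *\<^sub>R (w::real^'n))"
  by (simp add: matrix_vector_mul_assoc[symmetric] matrix_vector_mult_diff_rdistrib outer_mv)

lemma sym_inner:
  fixes A :: "real^'n^'n"
  assumes "transpose A = A"
  shows "(A *v x) \<bullet> y = x \<bullet> (A *v y)"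
  by (metis assms dot_lmul_matrix vector_transpose_matrix)

lemma opnorm_ge:
  fixes M :: "real^'n^'n"
  shows "norm (M *v x) \<le> opnorm M * norm x"
  unfolding opnorm_def
  by (rule onorm) (simp add: matrix_vector_mul_linear linear_conv_bounded_linear)

lemma opnorm_le:
  fixes M :: "real^'n^'n"
  assumes "\<And>x. norm (M *v x) \<le> b * norm x"
  shows "opnorm M \<le> b"
  unfolding opnorm_def by (rule onorm_le) (rule assms)

lemma opnorm_nonneg: "opnorm (M::real^'n^'n) \<ge> 0"
  unfolding opnorm_def
  by (rule onorm_pos_le) (simp add: matrix_vector_mul_linear linear_conv_bounded_linear)

lemma key:
  fixes A :: "real^'n^'n" and u1 :: "real^'n"
  assumes eps: "\<epsilon> > 0"
    and sym: "transpose A = A"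
    and u1_unit: "norm u1 = 1"
    and u1_eig: "A *v u1 = (1 + 2*\<epsilon>) *\<^sub>R u1"
    and lam1_simple: "\<And>v. A *v v = (1 + 2*\<epsilon>) *\<^sub>R v \<Longrightarrow> v \<in> span {u1}"
    and rest: "\<And>\<mu> v. v \<noteq> 0 \<Longrightarrow> A *v v = \<mu> *\<^sub>R v \<Longrightarrow> \<mu> \<noteq> 1 + 2*\<epsilon> \<Longrightarrow> \<bar>\<mu>\<bar> \<le> 1"
    and y: "u1 \<bullet> y = 0"
  shows "norm (A *v y) \<le> norm y"
proof (cases "y = 0")
  case True then show ?thesis by simp
next
  case False
  have si: "\<And>x z. (A *v x) \<bullet> z = x \<bullet> (A *v z)" using sym sym_inner by blast
  define S where "S = {z. u1 \<bullet> z = 0} \<inter> sphere (0::real^'n) 1"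
  have "closed {z. u1 \<bullet> z = (0::real)}"
    using closed_hyperplane by blast
  then have cS: "compact S" unfolding S_def by (intro closed_Int_compact compact_sphere)
  have "y /\<^sub>R norm y \<in> S" using y False by (simp add: S_def)
  then have neS: "S \<noteq> {}" by blast
  have "continuous_on S (\<lambda>z. (A *v z) \<bullet> (A *v z))"
    by (intro continuous_intros)
  then obtain x0 where x0S: "x0 \<in> S" and x0max: "\<And>z. z \<in> S \<Longrightarrow> (A *v z) \<bullet> (A *v z) \<le> (A *v x0) \<bullet> (A *v x0)"
    using continuous_attains_sup[OF cS neS] by blast
  define s where "s = (A *v x0) \<bullet> (A *v x0)"
  have x0u: "u1 \<bullet> x0 = 0" and x0n: "norm x0 = 1" using x0S by (auto simp: S_def)
  have x0x0: "x0 \<bullet> x0 = 1" using x0n by (simp add: dot_square_norm)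
  have bound: "(A *v z) \<bullet> (A *v z) \<le> s * (z \<bullet> z)" if "u1 \<bullet> z = 0" for z
  proof (cases "z = 0")
    case True then show ?thesis by simp
  next
    case False
    have "z /\<^sub>R norm z \<in> S" using that False by (simp add: S_def)
    then have "(A *v (z /\<^sub>R norm z)) \<bullet> (A *v (z /\<^sub>R norm z)) \<le> s" using x0max s_def by blast
    then have "((A *v z) \<bullet> (A *v z)) / (norm z)^2 \<le> s"
      by (simp add: matrix_vector_mult_scaleR power2_eq_square divide_inverse mult.commute)
    then show ?thesis using False by (simp add: pos_divide_le_eq dot_square_norm)
  qed
  define B where "B = s *\<^sub>R x0 - A *v (A *v x0)"
  define Q where "Q z = s * (z \<bullet> z) - (A *v z) \<bullet> (A *v z)" for z
  have Q0: "Q x0 = 0" using x0x0 by (simp add: Q_def s_def)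
  have Bu: "u1 \<bullet> B = 0"
  proof -
    have "u1 \<bullet> (A *v (A *v x0)) = (A *v u1) \<bullet> (A *v x0)" using si by simp
    also have "\<dots> = (1 + 2*\<epsilon>) * (u1 \<bullet> (A *v x0))" by (simp add: u1_eig)
    also have "u1 \<bullet> (A *v x0) = (A *v u1) \<bullet> x0" using si by simp
    also have "\<dots> = 0" by (simp add: u1_eig x0u)
    finally show ?thesis by (simp add: B_def x0u inner_diff_right)
  qed
  have Qexp: "Q (x0 + t *\<^sub>R B) = 2 * t * (B \<bullet> B) + t^2 * Q B" for t
  proof -
    have e1: "Q (x0 + t *\<^sub>R B) = Q x0 + 2 * t * (s * (x0 \<bullet> B) - (A *v x0) \<bullet> (A *v B)) + t^2 * Q B"
      unfolding Q_def
      by (simp add: matrix_vector_right_distrib matrix_vector_mult_scaleR inner_add_left inner_add_right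
          power2_eq_square inner_commute algebra_simps)
    have "(A *v x0) \<bullet> (A *v B) = (A *v (A *v x0)) \<bullet> B" using si by simp
    then have "s * (x0 \<bullet> B) - (A *v x0) \<bullet> (A *v B) = B \<bullet> B"
      by (simp add: B_def inner_diff_left)
    then show ?thesis using e1 Q0 by simp
  qed
  have Qnn: "Q z \<ge> 0" if "u1 \<bullet> z = 0" for z using bound[OF that] by (simp add: Q_def)
  have QB: "Q B \<ge> 0" using Qnn Bu by blast
  have B0: "B = 0"
  proof (rule ccontr)
    assume "B \<noteq> 0"
    then have c: "B \<bullet> B > 0" by simp
    define t where "t = - (B \<bullet> B) / (Q B + 1)"
    have "Q (x0 + t *\<^sub>R B) \<ge> 0" using Qnn Bu x0u by (simp add: inner_add_right)
    then have "2 * t * (B \<bullet> B) + t^2 * Q B \<ge> 0" using Qexp by simp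
    moreover have "2 * t * (B \<bullet> B) + t^2 * Q B < 0"
    proof -
      have "2 * t * (B \<bullet> B) + t^2 * Q B = t * (2 * (B \<bullet> B) + t * Q B)" by (simp add: power2_eq_square algebra_simps)
      moreover have "t < 0" using c QB by (simp add: t_def divide_neg_pos)
      moreover have "t * Q B > - (B \<bullet> B)"
      proof -
        have "t * Q B = - (B \<bullet> B) * (Q B / (Q B + 1))" by (simp add: t_def)
        moreover have "Q B / (Q B + 1) < 1" using QB by simp
        moreover have "(B \<bullet> B) * (Q B / (Q B + 1)) < (B \<bullet> B) * 1"
          by (rule mult_strict_left_mono) (use c \<open>Q B / (Q B + 1) < 1\<close> in auto)
        ultimately show ?thesis by simp
      qed
      ultimately show ?thesis using c by (simp add: mult_neg_pos del: inner_gt_zero_iff)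
    qed
    ultimately show False by simp
  qed
  then have AAx0: "A *v (A *v x0) = s *\<^sub>R x0" by (simp add: B_def)
  have s_le: "s \<le> 1"
  proof (rule ccontr)
    assume "\<not> s \<le> 1"
    then have s1: "s > 1" by simp
    define r where "r = sqrt s"
    have r1: "r > 1" using s1 by (simp add: r_def)
    have rr: "r * r = s" using s1 by (simp add: r_def)
    define z where "z = A *v x0 + r *\<^sub>R x0"
    have Az: "A *v z = r *\<^sub>R z"
      by (simp add: z_def matrix_vector_right_distrib matrix_vector_mult_scaleR AAx0 scaleR_add_right rr[symmetric])
    have zu: "u1 \<bullet> z = 0"
    proof -
      have "u1 \<bullet> (A *v x0) = (A *v u1) \<bullet> x0" using si by simp
      also have "\<dots> = 0" by (simp add: u1_eig x0u)
      finally show ?thesis by (simp add: z_def inner_add_right x0u)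
    qed
    show False
    proof (cases "z = 0")
      case True
      then have "A *v x0 = (- r) *\<^sub>R x0" by (simp add: z_def eq_neg_iff_add_eq_0)
      moreover have "x0 \<noteq> 0" using x0n by auto
      moreover have "- r \<noteq> 1 + 2*\<epsilon>" using r1 eps by simp
      ultimately have "\<bar>- r\<bar> \<le> 1" using rest by blast
      then show False using r1 by simp
    next
      case False
      show False
      proof (cases "r = 1 + 2*\<epsilon>")
        case True
        then have "z \<in> span {u1}" using lam1_simple Az by simp
        then obtain c where "z = c *\<^sub>R u1" by (auto simp: span_singleton)
        then have "z \<bullet> z = c * (u1 \<bullet> z)" by simp
        then have "z \<bullet> z = 0" using zu by simp
        then show False using False by simp
      next
        case False
        then have "\<bar>r\<bar> \<le> 1" using rest Az \<open>z \<noteq> 0\<close> by blast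
        then show False using r1 by simp
      qed
    qed
  qed
  have "(A *v y) \<bullet> (A *v y) \<le> y \<bullet> y"
  proof -
    have "s * (y \<bullet> y) \<le> 1 * (y \<bullet> y)" by (rule mult_right_mono[OF s_le inner_ge_zero])
    then show ?thesis using bound[OF y] by simp
  qed
  then show ?thesis by (simp add: norm_eq_sqrt_inner)
qed

theorem lemma2p7:
  fixes A :: "real^'n^'n" and u1 w :: "real^'n" and \<epsilon> :: real
  assumes eps: "\<epsilon> > 0"
    and sym: "transpose A = A"
    and u1_unit: "norm u1 = 1"
    and u1_eig: "A *v u1 = (1 + 2*\<epsilon>) *\<^sub>R u1"
    and lam1_simple: "\<And>v. A *v v = (1 + 2*\<epsilon>) *\<^sub>R v \<Longrightarrow> v \<in> span {u1}"
    and lam2: "\<exists>v. v \<noteq> 0 \<and> A *v v = v"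
    and rest: "\<And>\<mu> v. v \<noteq> 0 \<Longrightarrow> A *v v = \<mu> *\<^sub>R v \<Longrightarrow> \<mu> \<noteq> 1 + 2*\<epsilon> \<Longrightarrow> \<bar>\<mu>\<bar> \<le> 1"
    and w1: "(u1 \<bullet> w)^2 \<le> \<epsilon> / 2"
    and w2: "(u1 \<bullet> (A *v w))^2 \<le> \<epsilon> / 2"
  shows "opnorm (A ** (mat 1 - outer w w)) >
         (1 + \<epsilon>) * Inf {opnorm (A ** (mat 1 - outer u u)) | u. norm u = 1}"
proof -
  have uu: "u1 \<bullet> u1 = 1" using u1_unit by (simp add: dot_square_norm)
  have up: "opnorm (A ** (mat 1 - outer u1 u1)) \<le> 1"
  proof (rule opnorm_le)
    fix x
    define p where "p = x - (u1 \<bullet> x) *\<^sub>R u1"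
    have pu: "u1 \<bullet> p = 0" using uu by (simp add: p_def inner_diff_right)
    have "p \<bullet> p = x \<bullet> x - (u1 \<bullet> x)^2"
      using uu by (simp add: p_def inner_diff_left inner_diff_right inner_commute power2_eq_square)
    then have "p \<bullet> p \<le> x \<bullet> x" by simp
    then have pn: "norm p \<le> norm x" by (simp add: norm_eq_sqrt_inner)
    have "norm (A *v p) \<le> norm p"
      by (rule key[OF eps sym u1_unit u1_eig lam1_simple rest pu])
    then show "norm ((A ** (mat 1 - outer u1 u1)) *v x) \<le> 1 * norm x"
      using pn by (simp add: proj_mv p_def)
  qed
  let ?S = "{opnorm (A ** (mat 1 - outer u u)) | u. norm u = 1}"
  have "Inf ?S \<le> opnorm (A ** (mat 1 - outer u1 u1))"
  proof (rule cInf_lower)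
    show "bdd_below ?S" by (rule bdd_belowI[where m=0]) (auto simp: opnorm_nonneg)
  qed (use u1_unit in auto)
  then have inf1: "Inf ?S \<le> 1" using up by simp
  let ?M = "A ** (mat 1 - outer w w)"
  have Mu: "?M *v u1 = (1 + 2*\<epsilon>) *\<^sub>R u1 - (w \<bullet> u1) *\<^sub>R (A *v w)"
    by (simp add: proj_mv matrix_vector_mult_diff_distrib matrix_vector_mult_scaleR u1_eig)
  have dot: "u1 \<bullet> (?M *v u1) = (1 + 2*\<epsilon>) - (u1 \<bullet> w) * (u1 \<bullet> (A *v w))"
    using uu by (simp add: Mu inner_diff_right inner_commute)
  have "((u1 \<bullet> w) * (u1 \<bullet> (A *v w)))^2 \<le> (\<epsilon>/2) * (\<epsilon>/2)"
    unfolding power_mult_distrib by (rule mult_mono[OF w1 w2]) (use eps in auto)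
  then have "((u1 \<bullet> w) * (u1 \<bullet> (A *v w)))^2 \<le> (\<epsilon>/2)^2" by (simp add: power2_eq_square)
  then have "\<bar>(u1 \<bullet> w) * (u1 \<bullet> (A *v w))\<bar> \<le> \<epsilon>/2"
    using eps by (metis abs_le_square_iff abs_of_pos half_gt_zero)
  then have "u1 \<bullet> (?M *v u1) \<ge> 1 + 3/2*\<epsilon>" using dot by linarith
  also have "u1 \<bullet> (?M *v u1) \<le> norm u1 * norm (?M *v u1)" by (rule norm_cauchy_schwarz)
  also have "\<dots> \<le> opnorm ?M" using opnorm_ge[of ?M u1] u1_unit by simp
  finally have lo: "opnorm ?M \<ge> 1 + 3/2*\<epsilon>" .
  have "(1 + \<epsilon>) * Inf ?S \<le> (1 + \<epsilon>) * 1" by (rule mult_left_mono[OF inf1]) (use eps in simp)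
  moreover have "(1 + \<epsilon>) * 1 < opnorm ?M" using lo eps by simp
  ultimately show ?thesis by (rule le_less_trans)
qed

end
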